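(* Let $\{x^k\}$ be generated by Algorithm IRG with the backtracking stepsize rule and $\theta<\mu$, and assume $\rho_k\to0$. Assume $\{x^k\}$ has an accumulation point $\bar x$, $f$ satisfies the KL property at $\bar x$ with $\psi(t)=Mt^q$ for some $M>0$ and $q\in(0,1)$, and $\nabla f$ is Lipschitz continuous on a neighborhood of $\bar x$. Assume $\mathbb N\setminus\mathcal N$ is infinite, enumerate it increasingly as $j_1<j_2<\cdots$, and set $z^k:=x^{j_k}$. Then: (i) if $q\in(0,1/2]$, $\{z^k\}$ converges linearly to $\bar x$, i.e. there exist $C>0$ and $\lambda\in(0,1)$ with $\|z^k-\bar x\|\le C\lambda^k$ for all large $k$; (ii) if $q\in(1/2,1)$, there exists $\varrho>0$ with $\|z^k-\bar x\|\le\varrho k^{-\frac{1-q}{2q-1}}$ for all sufficiently large $k$.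
   Context: Algorithm IRG (general inexact reduced gradient framework). Let $f:\mathbb R^n\to\mathbb R$ be continuously differentiable. Parameters: initial point $x^1\in\mathbb R^n$, initial radii $\varepsilon_1>0$, $r_1>0$, reduction factors $\mu,\theta\in(0,1)$, and a sequence $\{\rho_k\}$ of positive numbers. For $k=1,2,\dots$: (1) choose $g^k\in\mathbb R^n$ with $\|g^k-\nabla f(x^k)\|\le\min\{\varepsilon_k,\rho_k\}$; (2) if $\|g^k\|\le r_k+\varepsilon_k$, set $r_{k+1}=\mu r_k$, $\varepsilon_{k+1}=\theta\varepsilon_k$, $d^k=0$; otherwise set $r_{k+1}=r_k$, $\varepsilon_{k+1}=\varepsilon_k$ and $d^k=-\frac{\|g^k\|-\varepsilon_k}{\|g^k\|}g^k$; (3) choose a stepsize $t_k>0$ by some rule; (4) set $x^{k+1}=x^k+t_kd^k$. The set of null iterations is $\mathcal N:=\{k\in\mathbb N: x^{k+1}=x^k\}$. Backtracking stepsize rule: fix $\beta,\gamma,\tau\in(0,1)$; if $d^k=0$ set $t_k=\tau$; otherwise $t_k=\max\{t\in\{1,\gamma,\gamma^2,\dots\}: f(x^k+td^k)\le f(x^k)-\beta t\|d^k\|^2\}$. KL property with $\psi(t)=Mt^q$: there exist $\eta>0$ and a neighborhood $U$ of $\bar x$ such that $\|\nabla f(x)\|\ge M(f(x)-f(\bar x))^q$ for all $x\in U$ with $f(\bar x)<f(x)<f(\bar x)+\eta$. *)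

theory Defs
  imports "HOL-Analysis.Analysis"
begin

definition C1_grad :: "('a::euclidean_space \<Rightarrow> real) \<Rightarrow> ('a \<Rightarrow> 'a) \<Rightarrow> bool" where
  "C1_grad f grad \<longleftrightarrow>
     (\<forall>x. (f has_derivative (\<lambda>h. grad x \<bullet> h)) (at x)) \<and> continuous_on UNIV grad"

definition armijo :: "('a::euclidean_space \<Rightarrow> real) \<Rightarrow> real \<Rightarrow> 'a \<Rightarrow> 'a \<Rightarrow> real \<Rightarrow> bool" where
  "armijo f beta xk dk t \<longleftrightarrow> f (xk + t *\<^sub>R dk) \<le> f xk - beta * t * (norm dk)^2"

text \<open>Sequences (x, g, eps, r, d, t), indexed from k = 1, generated by Algorithm IRG with
  the backtracking stepsize rule.\<close>
definition IRG_backtracking ::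
  "('a::euclidean_space \<Rightarrow> real) \<Rightarrow> ('a \<Rightarrow> 'a) \<Rightarrow> 'a \<Rightarrow> real \<Rightarrow> real \<Rightarrow> real \<Rightarrow> real
   \<Rightarrow> (nat \<Rightarrow> real) \<Rightarrow> real \<Rightarrow> real \<Rightarrow> real
   \<Rightarrow> (nat \<Rightarrow> 'a) \<Rightarrow> (nat \<Rightarrow> 'a) \<Rightarrow> (nat \<Rightarrow> real) \<Rightarrow> (nat \<Rightarrow> real) \<Rightarrow> (nat \<Rightarrow> 'a) \<Rightarrow> (nat \<Rightarrow> real)
   \<Rightarrow> bool" where
  "IRG_backtracking f grad x1 eps1 r1 mu theta rho beta gamma tau x g eps r d t \<longleftrightarrow>
     x 1 = x1 \<and> eps 1 = eps1 \<and> r 1 = r1 \<and>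
     (\<forall>k\<ge>1.
        norm (g k - grad (x k)) \<le> min (eps k) (rho k) \<and>
        (if norm (g k) \<le> r k + eps k
         then r (k+1) = mu * r k \<and> eps (k+1) = theta * eps k \<and> d k = 0
         else r (k+1) = r k \<and> eps (k+1) = eps k \<and>
              d k = - ((norm (g k) - eps k) / norm (g k)) *\<^sub>R g k) \<and>
        (if d k = 0 then t k = tau
         else (\<exists>i::nat. t k = gamma ^ i \<and> armijo f beta (x k) (d k) (gamma ^ i) \<and>
                  (\<forall>j<i. \<not> armijo f beta (x k) (d k) (gamma ^ j)))) \<and>
        x (k+1) = x k + t k *\<^sub>R d k)"

text \<open>KL property at xbar with desingularizing function psi(t) = M t^q (form from the paper).\<close>
definition KL_power :: "('a::euclidean_space \<Rightarrow> real) \<Rightarrow> ('a \<Rightarrow> 'a) \<Rightarrow> 'a \<Rightarrow> real \<Rightarrow> real \<Rightarrow> bool" where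
  "KL_power f grad xbar M q \<longleftrightarrow>
     (\<exists>eta>0. \<exists>U. open U \<and> xbar \<in> U \<and>
        (\<forall>y\<in>U. f xbar < f y \<and> f y < f xbar + eta \<longrightarrow>
            norm (grad y) \<ge> M * (f y - f xbar) powr q))"

end

theory Submission
  imports Defs
begin


locale irg =
  fixes f :: "'a::euclidean_space \<Rightarrow> real" and grad :: "'a \<Rightarrow> 'a"
    and x1 :: 'a and eps1 r1 mu theta beta gamma tau :: real and rho :: "nat \<Rightarrow> real"
    and x g d :: "nat \<Rightarrow> 'a" and eps r t :: "nat \<Rightarrow> real"
  assumes C1: "C1_grad f grad"
    and eps1: "eps1 > 0" and r1: "r1 > 0"
    and mu: "0 < mu" "mu < 1" and theta: "0 < theta" "theta < 1"
    and theta_mu: "theta < mu"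
    and beta: "0 < beta" "beta < 1" and gamma: "0 < gamma" "gamma < 1"
    and tau: "0 < tau"
    and alg: "IRG_backtracking f grad x1 eps1 r1 mu theta rho beta gamma tau x g eps r d t"
begin

lemma step:
  assumes "k \<ge> 1"
  shows "norm (g k - grad (x k)) \<le> min (eps k) (rho k) \<and>
        (if norm (g k) \<le> r k + eps k
         then r (k+1) = mu * r k \<and> eps (k+1) = theta * eps k \<and> d k = 0
         else r (k+1) = r k \<and> eps (k+1) = eps k \<and>
              d k = - ((norm (g k) - eps k) / norm (g k)) *\<^sub>R g k) \<and>
        (if d k = 0 then t k = tau
         else (\<exists>i::nat. t k = gamma ^ i \<and> armijo f beta (x k) (d k) (gamma ^ i) \<and>
                  (\<forall>j<i. \<not> armijo f beta (x k) (d k) (gamma ^ j)))) \<and>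
        x (k+1) = x k + t k *\<^sub>R d k"
  using alg assms unfolding IRG_backtracking_def by blast

lemma init: "eps 1 = eps1" "r 1 = r1"
  using alg unfolding IRG_backtracking_def by auto

lemma pos: "k \<ge> 1 \<Longrightarrow> eps k > 0 \<and> r k > 0 \<and> eps k * r1 \<le> r k * eps1"
proof (induction k rule: nat_induct_at_least)
  case base
  then show ?case using init eps1 r1 by (simp add: mult.commute)
next
  case (Suc k)
  from step[OF Suc.hyps] have S: "(if norm (g k) \<le> r k + eps k
         then r (k+1) = mu * r k \<and> eps (k+1) = theta * eps k \<and> d k = 0
         else r (k+1) = r k \<and> eps (k+1) = eps k \<and>
              d k = - ((norm (g k) - eps k) / norm (g k)) *\<^sub>R g k)" by blast
  show ?case
  proof (cases "norm (g k) \<le> r k + eps k")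
    case True
    with S have e: "r (k+1) = mu * r k" "eps (k+1) = theta * eps k" by auto
    have "theta * eps k * r1 \<le> mu * eps k * r1"
      using Suc.IH theta_mu r1 by (intro mult_right_mono) auto
    also have "\<dots> \<le> mu * (r k * eps1)" using Suc.IH mu by (simp add: mult.assoc)
    finally show ?thesis using e Suc.IH mu theta by (simp add: mult.assoc)
  next
    case False
    with S show ?thesis using Suc.IH by auto
  qed
qed

lemma t_pos: "k \<ge> 1 \<Longrightarrow> t k > 0"
  using step[of k] tau gamma by (cases "d k = 0") auto

lemma t_le1: "k \<ge> 1 \<Longrightarrow> d k \<noteq> 0 \<Longrightarrow> t k \<le> 1"
  using step[of k] gamma power_le_one[of gamma] by auto

lemma nonnull_iff: "k \<ge> 1 \<Longrightarrow> x (k+1) \<noteq> x k \<longleftrightarrow> d k \<noteq> 0"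
  using step[of k] t_pos[of k] by auto

lemma d_prop:
  assumes "k \<ge> 1" "d k \<noteq> 0"
  shows "norm (g k) > r k + eps k" "d k = - ((norm (g k) - eps k) / norm (g k)) *\<^sub>R g k"
    "norm (d k) = norm (g k) - eps k"
proof -
  have S: "(if norm (g k) \<le> r k + eps k
         then r (k+1) = mu * r k \<and> eps (k+1) = theta * eps k \<and> d k = 0
         else r (k+1) = r k \<and> eps (k+1) = eps k \<and>
              d k = - ((norm (g k) - eps k) / norm (g k)) *\<^sub>R g k)" using step[OF assms(1)] by blast
  then show g: "norm (g k) > r k + eps k" using assms(2) by (auto split: if_splits)
  with S show dk: "d k = - ((norm (g k) - eps k) / norm (g k)) *\<^sub>R g k" by auto
  have "norm (g k) > 0" using g pos[OF assms(1)] by linarith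
  then show "norm (d k) = norm (g k) - eps k"
    using g pos[OF assms(1)] by (simp add: dk)
qed

lemma descent: assumes "k \<ge> 1" shows "grad (x k) \<bullet> d k \<le> - ((norm (d k))^2)"
proof (cases "d k = 0")
  case True then show ?thesis by simp
next
  case False
  note D = d_prop[OF assms False]
  define c where "c = (norm (g k) - eps k) / norm (g k)"
  have ep: "eps k > 0" "r k > 0" using pos[OF assms] by auto
  have gn: "norm (g k) > 0" using D(1) ep by linarith
  have c0: "c > 0" unfolding c_def using D(1) ep gn by auto
  have err: "norm (g k - grad (x k)) \<le> eps k" using step[OF assms] by auto
  have e1: "grad (x k) \<bullet> g k = g k \<bullet> g k - (g k - grad (x k)) \<bullet> g k"
    by (simp add: inner_diff_left)
  have "(g k - grad (x k)) \<bullet> g k \<le> norm (g k - grad (x k)) * norm (g k)"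
    by (rule Cauchy_Schwarz_ineq2[THEN abs_le_D1])
  also have "\<dots> \<le> eps k * norm (g k)" using err by (simp add: mult_right_mono)
  finally have h: "grad (x k) \<bullet> g k \<ge> (norm (g k))^2 - eps k * norm (g k)"
    using e1 by (simp add: power2_norm_eq_inner)
  have "grad (x k) \<bullet> d k = - c * (grad (x k) \<bullet> g k)" using D(2) unfolding c_def by simp
  also have "\<dots> \<le> - c * (norm (g k)^2 - eps k * norm (g k))"
    using h c0 by simp
  also have "\<dots> = - ((norm (g k) - eps k)^2)" using gn unfolding c_def
    by (simp add: field_simps power2_eq_square)
  also have "\<dots> = - ((norm (d k))^2)" using D(3) by simp
  finally show ?thesis .
qed

lemma grad_bound:
  assumes "k \<ge> 1" "d k \<noteq> 0"
  shows "norm (grad (x k)) \<le> (1 + 2 * eps1 / r1) * norm (d k)"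
proof -
  note D = d_prop[OF assms]
  have P: "eps k > 0" "r k > 0" "eps k * r1 \<le> r k * eps1" using pos[OF assms(1)] by auto
  have err: "norm (g k - grad (x k)) \<le> eps k" using step[OF assms(1)] by auto
  have "norm (grad (x k)) \<le> norm (g k) + eps k"
    using norm_triangle_ineq4[of "g k" "g k - grad (x k)"] err by simp
  also have "\<dots> = norm (d k) + 2 * eps k" using D(3) by simp
  also have "eps k \<le> eps1 / r1 * norm (d k)"
  proof -
    have "eps k \<le> eps1 / r1 * r k" using P r1 by (simp add: field_simps)
    also have "\<dots> \<le> eps1 / r1 * norm (d k)" using D(1) D(3) eps1 r1 P
      by (intro mult_left_mono) auto
    finally show ?thesis .
  qed
  then have "2 * eps k \<le> 2 * eps1 / r1 * norm (d k)" by simp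
  then have "norm (d k) + 2 * eps k \<le> (1 + 2 * eps1 / r1) * norm (d k)"
    by (simp add: algebra_simps)
  finally show ?thesis .
qed

lemma decrease: assumes "k \<ge> 1"
  shows "f (x (k+1)) \<le> f (x k) - beta * t k * (norm (d k))^2"
proof (cases "d k = 0")
  case True then show ?thesis using step[OF assms] by simp
next
  case False
  then obtain i where i: "t k = gamma ^ i" "armijo f beta (x k) (d k) (gamma ^ i)"
    using step[OF assms] by auto
  then show ?thesis using step[OF assms] unfolding armijo_def by simp
qed

lemma decrease_strict: assumes "k \<ge> 1" "d k \<noteq> 0" shows "f (x (k+1)) < f (x k)"
proof -
  have "beta * t k * (norm (d k))^2 > 0" using beta t_pos[OF assms(1)] assms(2) by simp
  then show ?thesis using decrease[OF assms(1)] by linarith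
qed

lemma fmono: assumes "1 \<le> k" "k \<le> m" shows "f (x m) \<le> f (x k)"
  using assms(2)
proof (induction m rule: dec_induct)
  case base then show ?case by simp
next
  case (step m)
  have "f (x (Suc m)) \<le> f (x m)" using decrease[of m] step assms t_pos[of m] beta
    by (smt (verit, best) Suc_eq_plus1 le_trans mult_nonneg_nonneg zero_le_power2)
  then show ?case using step by simp
qed

lemma f_cont: "continuous_on UNIV f"
  using C1 unfolding C1_grad_def
  by (meson differentiable_def differentiable_imp_continuous_on differentiable_on_def)

lemma t_lower:
  assumes k: "k \<ge> 1" and dk: "d k \<noteq> 0" and L: "L > 0"
    and lip: "L-lipschitz_on (ball xb \<delta>) grad"
    and n1: "norm (x k - xb) < \<delta>/2" and n2: "norm (x (k+1) - x k) < gamma * \<delta> / 2"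
  shows "t k \<ge> min 1 (gamma * (1 - beta) / L)"
proof -
  obtain i where i: "t k = gamma ^ i" "\<forall>j<i. \<not> armijo f beta (x k) (d k) (gamma ^ j)"
    using step[OF k] dk by auto
  show ?thesis
  proof (cases i)
    case 0 then show ?thesis using i by simp
  next
    case (Suc j)
    define s where "s = gamma ^ j"
    have s0: "s > 0" unfolding s_def using gamma by simp
    have ts: "t k = gamma * s" using i Suc s_def by simp
    have na: "\<not> armijo f beta (x k) (d k) s" using i Suc s_def by auto
    have dx: "x (k+1) - x k = t k *\<^sub>R d k" using step[OF k] by simp
    have dpos: "norm (d k) > 0" using dk by simp
    have sd: "s * norm (d k) < \<delta>/2"
    proof -
      have "gamma * (s * norm (d k)) = norm (x (k+1) - x k)"
        using dx ts s0 gamma by (simp add: abs_of_pos)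
      then have "gamma * (s * norm (d k)) < gamma * (\<delta>/2)" using n2 by simp
      then show ?thesis using gamma by simp
    qed
    define phi where "phi u = f (x k + u *\<^sub>R d k)" for u
    have der: "(phi has_derivative (\<lambda>h. grad (x k + u *\<^sub>R d k) \<bullet> (h *\<^sub>R d k))) (at u within {0..s})" for u
    proof -
      have a: "((\<lambda>u. x k + u *\<^sub>R d k) has_derivative (\<lambda>h. h *\<^sub>R d k)) (at u within {0..s})"
        by (auto intro!: derivative_eq_intros)
      have b: "(f has_derivative (\<lambda>h. grad (x k + u *\<^sub>R d k) \<bullet> h)) (at (x k + u *\<^sub>R d k))"
        using C1 unfolding C1_grad_def by blast
      show ?thesis unfolding phi_def using has_derivative_compose[OF a b] by simp
    qed
    obtain u where u: "u \<in> {0..s}"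
      and mv: "phi s - phi 0 = grad (x k + u *\<^sub>R d k) \<bullet> ((s - 0) *\<^sub>R d k)"
      using mvt_very_simple[of 0 s phi, OF less_imp_le[OF s0] der] by blast
    define xi where "xi = x k + u *\<^sub>R d k"
    have xib: "xi \<in> ball xb \<delta>"
    proof -
      have "norm (xi - xb) \<le> norm (x k - xb) + norm (u *\<^sub>R d k)"
        unfolding xi_def by (metis add_diff_eq diff_add_eq norm_triangle_ineq add.commute)
      also have "norm (u *\<^sub>R d k) \<le> s * norm (d k)" using u by (simp add: mult_right_mono)
      finally show ?thesis using n1 sd by (simp add: dist_norm norm_minus_commute)
    qed
    have "norm (x k - xb) < \<delta>" using n1 norm_ge_zero[of "x k - xb"] by linarith
    then have xkb: "x k \<in> ball xb \<delta>" by (simp add: dist_norm norm_minus_commute)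
    have lipd: "norm (grad xi - grad (x k)) \<le> L * norm (xi - x k)"
      using lipschitz_onD[OF lip xib xkb] by (simp add: dist_norm)
    have "norm (xi - x k) = u * norm (d k)" using u unfolding xi_def by simp
    also have "\<dots> \<le> s * norm (d k)" using u by (simp add: mult_right_mono)
    finally have xin: "norm (xi - x k) \<le> s * norm (d k)" .
    have "(grad xi - grad (x k)) \<bullet> d k \<le> norm (grad xi - grad (x k)) * norm (d k)"
      by (rule Cauchy_Schwarz_ineq2[THEN abs_le_D1])
    also have "\<dots> \<le> L * (s * norm (d k)) * norm (d k)"
      using lipd xin L by (intro mult_right_mono) (auto intro: order_trans)
    finally have c1: "(grad xi - grad (x k)) \<bullet> d k \<le> L * s * (norm (d k))^2"
      by (simp add: power2_eq_square mult.assoc)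
    have "phi s - phi 0 = s * (grad (x k) \<bullet> d k) + s * ((grad xi - grad (x k)) \<bullet> d k)"
      using mv unfolding xi_def by (simp add: inner_diff_left algebra_simps)
    also have "\<dots> \<le> s * (- ((norm (d k))^2)) + s * (L * s * (norm (d k))^2)"
      using descent[OF k] c1 s0 by (intro add_mono mult_left_mono) auto
    finally have up: "phi s - phi 0 \<le> s * (- ((norm (d k))^2)) + s * (L * s * (norm (d k))^2)" .
    have low: "phi s > phi 0 - beta * s * (norm (d k))^2"
      using na unfolding armijo_def phi_def by simp
    have D: "(norm (d k))^2 > 0" using dpos by simp
    from up low have "s * (norm (d k))^2 * (1 - beta) < s * (norm (d k))^2 * (L * s)"
      by (simp add: algebra_simps)
    then have "1 - beta < L * s" using s0 D by (simp add: mult_less_cancel_left_pos)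
    then have "(1 - beta) / L < s" using L by (simp add: field_simps)
    then have "gamma * ((1 - beta) / L) \<le> gamma * s" using gamma
      by (intro mult_left_mono) auto
    then have "gamma * (1 - beta) / L \<le> t k" using ts by simp
    then show ?thesis by simp
  qed
qed

end



lemma concave_powr_step:
  fixes a b q :: real
  assumes "0 < b" "b \<le> a" "0 < q" "q < 1"
  shows "(1 - q) * (a - b) / a powr q \<le> a powr (1 - q) - b powr (1 - q)"
proof -
  have a0: "a > 0" using assms by simp
  have Y: "b powr (1 - q) * a powr q \<le> (1 - q) * b + q * a"
    using Youngs_inequality_0[of "1-q" q b a] assms a0 by simp
  have aq: "a powr q > 0" using a0 by simp
  have e: "a powr (1 - q) * a powr q = a" using a0 by (simp add: powr_add[symmetric])
  have "(1 - q) * (a - b) \<le> (a powr (1 - q) - b powr (1 - q)) * a powr q"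
    using Y e by (simp add: algebra_simps)
  then show ?thesis using aq by (simp add: divide_le_eq)
qed

lemma bern_powr:
  fixes y p :: real
  assumes "0 < y" "y \<le> 1" "0 < p"
  shows "1 + p * (1 - y) \<le> y powr (- p)"
proof -
  have "ln y \<le> y - 1" using ln_le_minus_one assms by simp
  then have "p * (1 + ln y) \<le> p * y" using assms by (intro mult_left_mono) auto
  then have "1 + p * (1 - y) \<le> 1 + (- p * ln y)" by (simp add: algebra_simps)
  also have "\<dots> \<le> exp (- p * ln y)" by (rule exp_ge_add_one_self)
  also have "\<dots> = y powr (- p)" using assms by (simp add: powr_def)
  finally show ?thesis .
qed

lemma rate_lin:
  fixes e :: "nat \<Rightarrow> real"
  assumes pos: "\<And>n. e n > 0" and lim: "e \<longlonglongrightarrow> 0" and q: "0 < q" "q \<le> 1/2" "q < 1"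
    and c: "c > 0" and rec: "\<And>n. n \<ge> N \<Longrightarrow> e (Suc n) \<le> e n - c * e n powr (2*q)"
  shows "\<exists>C>0. \<exists>lam. 0 < lam \<and> lam < 1 \<and>
          (\<forall>\<^sub>F k in sequentially. e (k - 1) powr (1 - q) \<le> C * lam ^ k)"
proof -
  from lim have "\<forall>\<^sub>F n in sequentially. e n < 1"
    by (simp add: order_tendstoD(2))
  then obtain N1 where N1: "\<And>n. n \<ge> N1 \<Longrightarrow> e n < 1" unfolding eventually_sequentially by auto
  define N2 where "N2 = max N N1"
  define lam where "lam = 1 - c"
  have r2: "e (Suc n) \<le> lam * e n" if "n \<ge> N2" for n
  proof -
    have "e n powr 1 \<le> e n powr (2*q)"
      using N1[of n] that pos[of n] q unfolding N2_def by (intro powr_mono') auto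
    then have "e n \<le> e n powr (2*q)" using pos[of n] by simp
    then have "c * e n \<le> c * e n powr (2*q)" using c by simp
    then show ?thesis using rec[of n] that unfolding N2_def lam_def by (simp add: algebra_simps)
  qed
  have lam1: "lam < 1" using c lam_def by simp
  have lam0: "lam > 0"
  proof -
    have "0 < e (Suc N2)" by (rule pos)
    also have "\<dots> \<le> lam * e N2" by (rule r2) simp
    finally show ?thesis using pos[of N2] by (simp add: zero_less_mult_iff)
  qed
  have ind: "e (N2 + m) \<le> e N2 * lam ^ m" for m
  proof (induction m)
    case 0 then show ?case by simp
  next
    case (Suc m)
    have "e (N2 + Suc m) \<le> lam * e (N2 + m)" using r2[of "N2 + m"] by simp
    also have "\<dots> \<le> lam * (e N2 * lam ^ m)" using Suc lam0 by simp
    finally show ?case by (simp add: algebra_simps)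
  qed
  define A where "A = e N2 / lam ^ N2"
  have A0: "A > 0" unfolding A_def using pos lam0 by simp
  have bnd: "e n \<le> A * lam ^ n" if nN: "n \<ge> N2" for n
  proof -
    obtain m where m: "n = N2 + m" using le_Suc_ex[OF nN] by blast
    have "e n \<le> e N2 * lam ^ m" unfolding m by (rule ind)
    also have "\<dots> = A * lam ^ n"
    proof -
      have ln: "lam ^ N2 \<noteq> 0" using lam0 by simp
      have "A * lam ^ n = e N2 * (lam ^ N2 / lam ^ N2) * lam ^ m"
        unfolding A_def m power_add by (simp only: times_divide_eq_left times_divide_eq_right mult.assoc mult.commute mult.left_commute)
      then show ?thesis using ln lam0 by simp
    qed
    finally show ?thesis .
  qed
  define lq where "lq = lam powr (1 - q)"
  have lq: "0 < lq" "lq < 1" unfolding lq_def using lam0 lam1 q powr_less_mono2[of "1-q" lam 1]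
    by auto
  define C where "C = A powr (1 - q) / lq"
  have C0: "C > 0" unfolding C_def using A0 lq by simp
  have "e (k - 1) powr (1 - q) \<le> C * lq ^ k" if kN: "k \<ge> N2 + 1" for k
  proof -
    have k1: "k - 1 \<ge> N2" using that by simp
    have "e (k - 1) powr (1 - q) \<le> (A * lam ^ (k - 1)) powr (1 - q)"
      using bnd[OF k1] less_imp_le[OF pos[of "k-1"]] q by (intro powr_mono2) auto
    also have "\<dots> = A powr (1 - q) * (lam ^ (k - 1)) powr (1 - q)"
      by (rule powr_mult)
    also have "(lam ^ (k - 1)) powr (1 - q) = lq ^ (k - 1)"
    proof -
      have "lam ^ (k - 1) = lam powr real (k - 1)" using powr_realpow[OF lam0] by simp
      then have "(lam ^ (k - 1)) powr (1 - q) = lam powr (real (k - 1) * (1 - q))"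
        by (simp add: powr_powr)
      also have "\<dots> = lq ^ (k - 1)" unfolding lq_def using lam0 by (simp add: powr_power)
      finally show ?thesis .
    qed
    also have "A powr (1 - q) * lq ^ (k - 1) = C * lq ^ k"
    proof -
      obtain k' where k': "k = Suc k'" using kN by (cases k) auto
      have "C * lq ^ k = A powr (1 - q) * (lq ^ k' * (lq / lq))" unfolding C_def k' by simp
      then show ?thesis using lq k' by simp
    qed
    finally show ?thesis .
  qed
  then show ?thesis using C0 lq unfolding eventually_sequentially by blast
qed

lemma rate_sub:
  fixes e :: "nat \<Rightarrow> real"
  assumes pos: "\<And>n. e n > 0" and q: "1/2 < q" "q < 1"
    and c: "c > 0" and rec: "\<And>n. n \<ge> N \<Longrightarrow> e (Suc n) \<le> e n - c * e n powr (2*q)"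
  shows "\<exists>vr>0. \<forall>\<^sub>F k in sequentially.
          e (k - 1) powr (1 - q) \<le> vr * real k powr (- (1 - q) / (2 * q - 1))"
proof -
  define p where "p = 2 * q - 1"
  have p0: "p > 0" using q unfolding p_def by simp
  have st: "e (Suc n) powr (- p) \<ge> e n powr (- p) + p * c" if nN: "n \<ge> N" for n
  proof -
    define y where "y = 1 - c * e n powr p"
    have en: "e n > 0" "e (Suc n) > 0" using pos by auto
    have e2: "e n powr (2*q) = e n * e n powr p"
    proof -
      have "e n powr (2*q) = e n powr (1 + p)" unfolding p_def by simp
      also have "\<dots> = e n * e n powr p" using en by (simp add: powr_add)
      finally show ?thesis .
    qed
    have le: "e (Suc n) \<le> e n * y" using rec[OF nN] e2 unfolding y_def by (simp add: algebra_simps)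
    have y0: "y > 0"
    proof -
      have "0 < e n * y" using le en by linarith
      then show ?thesis using en by (simp add: zero_less_mult_iff)
    qed
    have cp: "c * e n powr p > 0" using c en by simp
    have y1: "y \<le> 1" unfolding y_def using cp by simp
    have "(e n * y) powr (- p) \<le> e (Suc n) powr (- p)"
      using le en p0 by (intro powr_mono2') auto
    moreover have "(e n * y) powr (- p) = e n powr (- p) * y powr (- p)" by (rule powr_mult)
    moreover have "y powr (- p) \<ge> 1 + p * (1 - y)" using bern_powr[OF y0 y1 p0] .
    moreover have "e n powr (- p) * (1 + p * (1 - y)) = e n powr (- p) + p * c"
    proof -
      have "e n powr (- p) * e n powr p = 1" using en by (simp add: powr_add[symmetric])
      then show ?thesis unfolding y_def by (simp add: algebra_simps)
    qed
    moreover have "e n powr (- p) * (1 + p * (1 - y)) \<le> e n powr (- p) * y powr (- p)"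
      using calculation(3) en by (intro mult_left_mono) auto
    ultimately show ?thesis by linarith
  qed
  have ind: "e (N + m) powr (- p) \<ge> real m * (p * c)" for m
  proof (induction m)
    case 0 then show ?case using pos by simp
  next
    case (Suc m)
    have "e (N + Suc m) powr (- p) \<ge> e (N + m) powr (- p) + p * c"
      using st[of "N + m"] by simp
    then show ?case using Suc by (simp add: algebra_simps)
  qed
  define D where "D = p * c / 2"
  have D0: "D > 0" unfolding D_def using p0 c by simp
  define a where "a = - (1 - q) / p"
  have a0: "a \<le> 0" unfolding a_def using p0 q by (simp add: divide_nonpos_pos)
  define vr where "vr = D powr a"
  have vr0: "vr > 0" unfolding vr_def using D0 by simp
  have "e (k - 1) powr (1 - q) \<le> vr * real k powr (- (1 - q) / (2 * q - 1))"
    if kN: "k \<ge> 2 * N + 2" for k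
  proof -
    define n where "n = k - 1"
    have nk: "real k = real n + 1" "n \<ge> N" using kN unfolding n_def by auto
    obtain m where m: "n = N + m" using le_Suc_ex[OF nk(2)] by blast
    have "real m * (p * c) \<ge> D * real k"
    proof -
      have "real k \<le> 2 * real m" using kN nk m by linarith
      then have "real k * (p * c) \<le> 2 * real m * (p * c)" using p0 c by (intro mult_right_mono) auto
      then show ?thesis unfolding D_def by (simp add: algebra_simps)
    qed
    then have E: "e n powr (- p) \<ge> D * real k" using ind[of m] m by simp
    have Dk: "D * real k > 0" using D0 kN by simp
    have "e n powr (1 - q) = (e n powr (- p)) powr a"
      unfolding a_def using p0 by (simp add: powr_powr)
    also have "\<dots> \<le> (D * real k) powr a"
      using E Dk a0 by (intro powr_mono2') auto
    also have "\<dots> = vr * real k powr a" unfolding vr_def by (rule powr_mult)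
    finally show ?thesis unfolding n_def a_def p_def .
  qed
  then show ?thesis using vr0 unfolding eventually_sequentially by blast
qed




locale irg2 = irg f grad x1 eps1 r1 mu theta beta gamma tau rho x g d eps r t
  for f :: "'a::euclidean_space \<Rightarrow> real" and grad x1 eps1 r1 mu theta beta gamma tau rho x g d eps r t +
  fixes xbar :: 'a and M q :: real
  assumes acc: "\<exists>s::nat \<Rightarrow> nat. strict_mono s \<and> (x \<circ> s) \<longlonglongrightarrow> xbar"
    and Mq: "M > 0" "0 < q" "q < 1"
    and KL: "KL_power f grad xbar M q"
    and inf: "infinite {k::nat. k \<ge> 1 \<and> x (k+1) \<noteq> x k}"
begin

lemma fsub: obtains s where "strict_mono s" "(\<lambda>n. x (s n)) \<longlonglongrightarrow> xbar"
  "(\<lambda>n. f (x (s n))) \<longlonglongrightarrow> f xbar"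
proof -
  obtain s where s: "strict_mono s" "(x \<circ> s) \<longlonglongrightarrow> xbar" using acc by blast
  then have c: "(\<lambda>n. x (s n)) \<longlonglongrightarrow> xbar" by (simp add: o_def)
  have "isCont f xbar" using f_cont by (simp add: continuous_on_eq_continuous_at)
  then have "(\<lambda>n. f (x (s n))) \<longlonglongrightarrow> f xbar" using isCont_tendsto_compose[OF _ c] by blast
  then show ?thesis using that s c by blast
qed

lemma f_ge: assumes "k \<ge> 1" shows "f (x k) \<ge> f xbar"
proof -
  obtain s where s: "strict_mono s" "(\<lambda>n. f (x (s n))) \<longlonglongrightarrow> f xbar" using fsub by blast
  have "\<forall>n\<ge>k. f (x (s n)) \<le> f (x k)"
    using fmono[OF assms] seq_suble[OF s(1)] le_trans by blast
  then show ?thesis using LIMSEQ_le_const2[OF s(2)] by blast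
qed

lemma f_lim: "(\<lambda>k. f (x k)) \<longlonglongrightarrow> f xbar"
proof (rule LIMSEQ_I)
  fix e :: real assume e: "e > 0"
  obtain s where s: "strict_mono s" "(\<lambda>n. f (x (s n))) \<longlonglongrightarrow> f xbar" using fsub by blast
  then obtain n0 where n0: "\<And>n. n \<ge> n0 \<Longrightarrow> norm (f (x (s n)) - f xbar) < e"
    using LIMSEQ_D e by blast
  define n1 where "n1 = max n0 1"
  have sn: "s n1 \<ge> 1" using seq_suble[OF s(1), of n1] unfolding n1_def by linarith
  have "norm (f (x k) - f xbar) < e" if "k \<ge> s n1" for k
  proof -
    have "f (x k) \<le> f (x (s n1))" using fmono[OF sn that] .
    moreover have "f (x k) \<ge> f xbar" using f_ge sn that by simp
    moreover have "f (x (s n1)) - f xbar < e" using n0[of n1] unfolding n1_def by simp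
    ultimately show ?thesis by simp
  qed
  then show "\<exists>no. \<forall>n\<ge>no. norm (f (x n) - f xbar) < e" by blast
qed

lemma f_gt: assumes "k \<ge> 1" shows "f (x k) > f xbar"
proof -
  obtain m where m: "m \<ge> k" "m \<in> {k::nat. k \<ge> 1 \<and> x (k+1) \<noteq> x k}"
    using inf unfolding infinite_nat_iff_unbounded_le by blast
  then have m1: "m \<ge> 1" "d m \<noteq> 0" using nonnull_iff by auto
  have "f (x (m+1)) < f (x m)" using decrease_strict[OF m1] .
  moreover have "f (x m) \<le> f (x k)" using fmono[OF assms m(1)] .
  moreover have "f (x (m+1)) \<ge> f xbar" using f_ge by simp
  ultimately show ?thesis by simp
qed

definition "Cg = 1 + 2 * eps1 / r1"
definition "Kc = Cg / ((1 - q) * beta * M)"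
definition "Phi k = (f (x k) - f xbar) powr (1 - q)"

lemma Cg_pos: "Cg > 0" unfolding Cg_def using eps1 r1 by (simp add: add_pos_nonneg)
lemma Kc_pos: "Kc > 0" unfolding Kc_def using Cg_pos Mq beta by simp

lemma Phi_mono: assumes "k \<ge> 1" shows "Phi (k+1) \<le> Phi k"
  unfolding Phi_def using f_ge[of "k+1"] fmono[OF assms, of "k+1"] Mq
  by (intro powr_mono2) auto

lemma Phi_nonneg: "Phi k \<ge> 0" unfolding Phi_def by simp

lemma onestep:
  assumes k: "k \<ge> 1" and KLk: "M * (f (x k) - f xbar) powr q \<le> norm (grad (x k))"
  shows "norm (x (k+1) - x k) \<le> Kc * (Phi k - Phi (k+1))"
proof (cases "d k = 0")
  case True
  then have "x (k+1) = x k" using nonnull_iff[OF k] by auto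
  then show ?thesis using Phi_mono[OF k] Kc_pos by simp
next
  case False
  define a where "a = f (x k) - f xbar"
  define b where "b = f (x (k+1)) - f xbar"
  have a0: "a > 0" unfolding a_def using f_gt[OF k] by simp
  have b0: "b > 0" unfolding b_def using f_gt[of "k+1"] by simp
  have dec: "a - b \<ge> beta * t k * (norm (d k))^2"
    unfolding a_def b_def using decrease[OF k] by simp
  then have ba: "b \<le> a" using beta t_pos[OF k] by (smt (verit) mult_nonneg_nonneg zero_le_power2)
  have conc: "(1 - q) * (a - b) / a powr q \<le> Phi k - Phi (k+1)"
    using concave_powr_step[OF b0 ba] Mq unfolding Phi_def a_def b_def by simp
  have aq: "a powr q > 0" using a0 by simp
  have gb: "norm (grad (x k)) \<le> Cg * norm (d k)" using grad_bound[OF k False] unfolding Cg_def .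
  have aqb: "M * a powr q \<le> Cg * norm (d k)" using KLk gb unfolding a_def by simp
  have tk: "t k > 0" using t_pos[OF k] .
  have dx: "norm (x (k+1) - x k) = t k * norm (d k)"
    using step[OF k] tk by simp
  have "t k * norm (d k) * (M * a powr q) \<le> t k * norm (d k) * (Cg * norm (d k))"
    using aqb tk by (intro mult_left_mono) auto
  also have "\<dots> = Cg / beta * (beta * t k * (norm (d k))^2)" using beta
    by (simp add: power2_eq_square)
  also have "\<dots> \<le> Cg / beta * (a - b)" using dec Cg_pos beta by (intro mult_left_mono) auto
  finally have "t k * norm (d k) * a powr q * M \<le> Cg / beta * (a - b)" by (simp add: algebra_simps)
  then have "t k * norm (d k) * a powr q \<le> (Cg / beta * (a - b)) / M"
    by (subst pos_le_divide_eq[OF Mq(1)])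
  also have "(Cg / beta * (a - b)) / M = Kc * ((1 - q) * (a - b))"
    unfolding Kc_def using Mq beta by (simp add: field_simps)
  finally have "t k * norm (d k) \<le> Kc * ((1 - q) * (a - b)) / a powr q"
    using aq by (simp add: field_simps)
  also have "\<dots> = Kc * ((1 - q) * (a - b) / a powr q)" by simp
  also have "\<dots> \<le> Kc * (Phi k - Phi (k+1))" using conc Kc_pos by (intro mult_left_mono) auto
  finally show ?thesis using dx by simp
qed


lemma Phi_lim: "Phi \<longlonglongrightarrow> 0"
proof -
  have a: "(\<lambda>k. f (x k) - f xbar) \<longlonglongrightarrow> 0" using f_lim by (simp add: LIM_zero)
  have b: "\<forall>\<^sub>F k in sequentially. 0 \<le> f (x k) - f xbar"
    using f_ge unfolding eventually_sequentially by (metis diff_ge_0_iff_ge)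
  show ?thesis unfolding Phi_def
    by (rule tendsto_zero_powrI[OF a tendsto_const b]) (use Mq in simp)
qed

lemma trap:
  obtains k0 where "k0 \<ge> 1" "\<And>m. m \<ge> k0 \<Longrightarrow> M * (f (x m) - f xbar) powr q \<le> norm (grad (x m))"
    "\<And>m. m \<ge> k0 \<Longrightarrow> norm (x m - xbar) \<le> Kc * Phi m"
proof -
  obtain eta U where eta: "eta > 0" "open U" "xbar \<in> U"
    and KLU: "\<And>y. y \<in> U \<Longrightarrow> f xbar < f y \<Longrightarrow> f y < f xbar + eta \<Longrightarrow>
            norm (grad y) \<ge> M * (f y - f xbar) powr q"
    using KL unfolding KL_power_def by blast
  obtain R where R: "R > 0" "ball xbar R \<subseteq> U" using eta open_contains_ball by blast
  have ev1: "\<forall>\<^sub>F k in sequentially. f (x k) < f xbar + eta"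
    using f_lim eta by (intro order_tendstoD(2)) auto
  have ev2: "\<forall>\<^sub>F k in sequentially. Kc * Phi k < R / 2"
  proof -
    have "(\<lambda>k. Kc * Phi k) \<longlonglongrightarrow> Kc * 0" by (intro tendsto_mult tendsto_const Phi_lim)
    then show ?thesis using R by (intro order_tendstoD(2)) auto
  qed
  obtain N where N: "\<And>k. k \<ge> N \<Longrightarrow> f (x k) < f xbar + eta \<and> Kc * Phi k < R / 2"
    using eventually_conj[OF ev1 ev2] unfolding eventually_sequentially by blast
  obtain s where s: "strict_mono s" "(\<lambda>n. x (s n)) \<longlonglongrightarrow> xbar" using fsub by blast
  have "\<forall>\<^sub>F n in sequentially. dist (x (s n)) xbar < R / 2"
    using s(2) R by (intro tendstoD) auto
  then obtain n1 where n1: "\<And>n. n \<ge> n1 \<Longrightarrow> dist (x (s n)) xbar < R / 2"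
    unfolding eventually_sequentially by blast
  define n where "n = max n1 (max N 1)"
  define k0 where "k0 = s n"
  have k0: "k0 \<ge> 1" "k0 \<ge> N" "dist (x k0) xbar < R / 2"
    using seq_suble[OF s(1), of n] n1[of n] unfolding k0_def n_def by auto
  have KLapp: "M * (f (x m) - f xbar) powr q \<le> norm (grad (x m))"
    if "m \<ge> k0" "x m \<in> ball xbar R" for m
    using KLU[of "x m"] R that f_gt[of m] N[of m] k0 by auto
  have claim: "x (k0 + m) \<in> ball xbar R \<and> norm (x (k0 + m) - x k0) \<le> Kc * (Phi k0 - Phi (k0 + m))" for m
  proof (induction m)
    case 0 then show ?case using k0 R by (simp add: dist_commute)
  next
    case (Suc m)
    have os: "norm (x (k0 + m + 1) - x (k0 + m)) \<le> Kc * (Phi (k0 + m) - Phi (k0 + m + 1))"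
      using onestep[of "k0 + m"] KLapp[of "k0 + m"] Suc k0 by simp
    have e: "(x (k0 + m) - x k0) + (x (k0 + m + 1) - x (k0 + m)) = x (k0 + m + 1) - x k0" by simp
    have "norm (x (k0 + m + 1) - x k0) \<le> norm (x (k0 + m) - x k0) + norm (x (k0 + m + 1) - x (k0 + m))"
      using norm_triangle_ineq[of "x (k0 + m) - x k0" "x (k0 + m + 1) - x (k0 + m)", unfolded e] .
    also have "\<dots> \<le> Kc * (Phi k0 - Phi (k0 + m + 1))" using Suc os by (simp add: algebra_simps)
    finally have n2: "norm (x (k0 + Suc m) - x k0) \<le> Kc * (Phi k0 - Phi (k0 + Suc m))" by simp
    have "Kc * (Phi k0 - Phi (k0 + Suc m)) \<le> Kc * Phi k0" using Kc_pos Phi_nonneg by simp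
    also have "\<dots> < R / 2" using N[of k0] k0 by simp
    finally have "dist (x (k0 + Suc m)) (x k0) < R / 2" using n2 by (simp add: dist_norm)
    then have "dist xbar (x (k0 + Suc m)) < R" using k0(3) dist_triangle[of xbar "x (k0 + Suc m)" "x k0"]
      by (simp add: dist_commute)
    then show ?case using n2 by simp
  qed
  have inball: "x m \<in> ball xbar R" if "m \<ge> k0" for m
    using claim[of "m - k0"] that by simp
  have KLall: "M * (f (x m) - f xbar) powr q \<le> norm (grad (x m))" if "m \<ge> k0" for m
    using KLapp inball that by blast
  have tail: "norm (x j - x m) \<le> Kc * (Phi m - Phi j)" if "m \<ge> k0" "m \<le> j" for m j
    using that(2)
  proof (induction j rule: dec_induct)
    case base then show ?case by simp
  next
    case (step j)
    have os: "norm (x (j + 1) - x j) \<le> Kc * (Phi j - Phi (j + 1))"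
      using onestep[of j] KLall[of j] step that k0 by simp
    have e: "(x j - x m) + (x (j + 1) - x j) = x (j + 1) - x m" by simp
    have "norm (x (j + 1) - x m) \<le> norm (x j - x m) + norm (x (j + 1) - x j)"
      using norm_triangle_ineq[of "x j - x m" "x (j + 1) - x j", unfolded e] .
    also have "\<dots> \<le> Kc * (Phi m - Phi (j + 1))" using step os by (simp add: algebra_simps)
    finally show ?case by simp
  qed
  have dist_bound: "norm (x m - xbar) \<le> Kc * Phi m" if "m \<ge> k0" for m
  proof -
    have lim: "(\<lambda>n. norm (x (s n) - x m)) \<longlonglongrightarrow> norm (xbar - x m)"
      by (intro tendsto_norm tendsto_diff s(2) tendsto_const)
    have "\<forall>n\<ge>m. norm (x (s n) - x m) \<le> Kc * Phi m"
    proof (intro allI impI)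
      fix n assume "n \<ge> m"
      then have "s n \<ge> m" using seq_suble[OF s(1), of n] by linarith
      then have "norm (x (s n) - x m) \<le> Kc * (Phi m - Phi (s n))" using tail that by blast
      also have "\<dots> \<le> Kc * Phi m" using Kc_pos Phi_nonneg by simp
      finally show "norm (x (s n) - x m) \<le> Kc * Phi m" .
    qed
    then have "norm (xbar - x m) \<le> Kc * Phi m" using LIMSEQ_le_const2[OF lim] by blast
    then show ?thesis by (simp add: norm_minus_commute)
  qed
  show ?thesis using that k0(1) KLall dist_bound by blast
qed

end



context irg2 begin

abbreviation "SS \<equiv> {k::nat. k \<ge> 1 \<and> x (k+1) \<noteq> x k}"

lemma j_props: "enumerate SS n \<ge> 1" "d (enumerate SS n) \<noteq> 0" "enumerate SS n \<ge> n"
proof -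
  have m: "enumerate SS n \<in> SS" using enumerate_in_set[OF inf] .
  then show "enumerate SS n \<ge> 1" by simp
  then show "d (enumerate SS n) \<noteq> 0" using m nonnull_iff by blast
  show "enumerate SS n \<ge> n" using le_enumerate[OF inf] .
qed

lemma j_next: "x (enumerate SS (Suc n)) = x (enumerate SS n + 1)"
proof -
  define a where "a = enumerate SS n"
  define b where "b = enumerate SS (Suc n)"
  have ab: "a < b" unfolding a_def b_def using enumerate_step[OF inf] .
  have bl: "b = (LEAST s. s \<in> SS \<and> a < s)" unfolding a_def b_def using enumerate_Suc''[OF inf] .
  have notin: "m \<notin> SS" if "a < m" "m < b" for m
  proof
    assume "m \<in> SS"
    then have "b \<le> m" unfolding bl using that(1) by (intro Least_le) simp
    then show False using that(2) by simp
  qed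
  have a1: "a \<ge> 1" unfolding a_def using j_props(1) .
  have "x (a + 1 + i) = x (a + 1)" if "a + 1 + i \<le> b" for i
    using that
  proof (induction i)
    case 0 then show ?case by simp
  next
    case (Suc i)
    have "a + 1 + i \<notin> SS" using notin[of "a + 1 + i"] Suc.prems by simp
    then have "x (a + 1 + i + 1) = x (a + 1 + i)" using a1 by simp
    then show ?case using Suc by simp
  qed
  from this[of "b - a - 1"] ab show ?thesis unfolding a_def[symmetric] b_def[symmetric] by simp
qed

lemma j_mono: "strict_mono (enumerate SS)"
  by (rule strict_monoI) (use enumerate_mono[OF _ inf] in blast)

lemma final:
  assumes Lip: "\<exists>\<delta>>0. \<exists>L. L-lipschitz_on (ball xbar \<delta>) grad"
  shows
    "(q \<le> 1/2 \<longrightarrow>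
       (\<exists>C>0. \<exists>lam. 0 < lam \<and> lam < 1 \<and>
          (\<forall>\<^sub>F k in sequentially.
             norm (x (enumerate {k::nat. k \<ge> 1 \<and> x (k+1) \<noteq> x k} (k - 1)) - xbar) \<le> C * lam ^ k))) \<and>
     (1/2 < q \<longrightarrow>
       (\<exists>vr>0. \<forall>\<^sub>F k in sequentially.
          norm (x (enumerate {k::nat. k \<ge> 1 \<and> x (k+1) \<noteq> x k} (k - 1)) - xbar)
            \<le> vr * real k powr (- (1 - q) / (2 * q - 1))))"
proof -
  obtain k0 where k0: "k0 \<ge> 1" "\<And>m. m \<ge> k0 \<Longrightarrow> M * (f (x m) - f xbar) powr q \<le> norm (grad (x m))"
    "\<And>m. m \<ge> k0 \<Longrightarrow> norm (x m - xbar) \<le> Kc * Phi m"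
    using trap by blast
  have xlim: "x \<longlonglongrightarrow> xbar"
  proof -
    have "(\<lambda>m. x m - xbar) \<longlonglongrightarrow> 0"
    proof (rule Lim_null_comparison)
      show "\<forall>\<^sub>F m in sequentially. norm (x m - xbar) \<le> Kc * Phi m"
        using k0(3) unfolding eventually_sequentially by blast
      show "(\<lambda>m. Kc * Phi m) \<longlonglongrightarrow> 0" using tendsto_mult[OF tendsto_const Phi_lim, of Kc] by simp
    qed
    then show ?thesis by (simp add: LIM_zero_iff)
  qed
  have dlim: "(\<lambda>k. x (k+1) - x k) \<longlonglongrightarrow> 0"
  proof -
    have "(\<lambda>k. x (k+1)) \<longlonglongrightarrow> xbar" using xlim by (rule LIMSEQ_ignore_initial_segment)
    then show ?thesis using tendsto_diff[OF _ xlim] by fastforce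
  qed
  obtain del L0 where del: "del > 0" "L0-lipschitz_on (ball xbar del) grad" using Lip by blast
  define L where "L = L0 + 1"
  have L: "L > 0" "L-lipschitz_on (ball xbar del) grad"
    using lipschitz_on_nonneg[OF del(2)] lipschitz_on_le[OF del(2), of L] unfolding L_def by auto
  have ev1: "\<forall>\<^sub>F k in sequentially. dist (x k) xbar < del / 2" using xlim del by (intro tendstoD) auto
  have ev2: "\<forall>\<^sub>F k in sequentially. dist (x (k+1) - x k) 0 < gamma * del / 2"
    using dlim del gamma by (intro tendstoD) auto
  obtain k1 where k1: "\<And>k. k \<ge> k1 \<Longrightarrow> dist (x k) xbar < del / 2 \<and> dist (x (k+1) - x k) 0 < gamma * del / 2"
    using eventually_conj[OF ev1 ev2] unfolding eventually_sequentially by blast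
  define tmin where "tmin = min 1 (gamma * (1 - beta) / L)"
  have tmin0: "tmin > 0" unfolding tmin_def using gamma beta L by simp
  have tlow: "t k \<ge> tmin" if "k \<ge> max k0 k1" "d k \<noteq> 0" for k
    using t_lower[of k L xbar del] that k1[of k] k0(1) L unfolding tmin_def by (simp add: dist_norm)
  define j where "j = enumerate SS"
  define e where "e n = f (x (j n)) - f xbar" for n
  have epos: "e n > 0" for n unfolding e_def using f_gt j_props(1) j_def by simp
  have elim: "e \<longlonglongrightarrow> 0"
  proof -
    have "filterlim j sequentially sequentially" unfolding j_def using j_mono by (rule filterlim_subseq)
    then have "(\<lambda>n. f (x (j n))) \<longlonglongrightarrow> f xbar" using f_lim by (rule filterlim_compose[rotated])
    then show ?thesis unfolding e_def by (simp add: LIM_zero)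
  qed
  define c where "c = beta * tmin * (M / Cg)^2"
  have c0: "c > 0" unfolding c_def using beta tmin0 Mq Cg_pos by simp
  have rec: "e (Suc n) \<le> e n - c * e n powr (2*q)" if nN: "n \<ge> max k0 k1" for n
  proof -
    define k where "k = j n"
    have k: "k \<ge> 1" "d k \<noteq> 0" "k \<ge> max k0 k1" using j_props[of n] nN unfolding k_def j_def by auto
    have es: "e (Suc n) = f (x (k + 1)) - f xbar" unfolding e_def k_def j_def using j_next by simp
    have en: "e n = f (x k) - f xbar" unfolding e_def k_def ..
    have kl: "M * e n powr q \<le> Cg * norm (d k)"
      using k0(2)[of k] grad_bound[OF k(1) k(2)] k en unfolding Cg_def by force
    have "M / Cg * e n powr q \<le> norm (d k)" using kl Cg_pos by (simp add: field_simps)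
    then have "(M / Cg * e n powr q)^2 \<le> (norm (d k))^2"
      using Mq Cg_pos by (intro power_mono) auto
    moreover have "(M / Cg * e n powr q)^2 = (M / Cg)^2 * e n powr (2*q)"
      using epos[of n] by (simp add: power_mult_distrib power2_eq_square powr_add[symmetric])
    ultimately have d2: "(M / Cg)^2 * e n powr (2*q) \<le> (norm (d k))^2" by simp
    have "c * e n powr (2*q) = beta * tmin * ((M / Cg)^2 * e n powr (2*q))" unfolding c_def by simp
    also have "\<dots> \<le> beta * t k * (norm (d k))^2"
      using d2 tlow[OF k(3) k(2)] beta tmin0 by (intro mult_mono) auto
    finally show ?thesis using decrease[OF k(1)] es en by simp
  qed
  have dist_e: "norm (x (j (k - 1)) - xbar) \<le> Kc * e (k - 1) powr (1 - q)" if "k \<ge> k0 + 1" for k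
  proof -
    have "j (k - 1) \<ge> k0" using j_props(3)[of "k-1"] that unfolding j_def by simp
    then show ?thesis using k0(3) unfolding Phi_def e_def by simp
  qed
  have evd: "\<forall>\<^sub>F k in sequentially. norm (x (j (k - 1)) - xbar) \<le> Kc * e (k - 1) powr (1 - q)"
    using dist_e unfolding eventually_sequentially by blast
  have P1: "\<exists>C>0. \<exists>lam. 0 < lam \<and> lam < 1 \<and>
          (\<forall>\<^sub>F k in sequentially. norm (x (j (k - 1)) - xbar) \<le> C * lam ^ k)" if q2: "q \<le> 1/2"
  proof -
    obtain C lam where C: "C > 0" "0 < lam" "lam < 1"
      "\<forall>\<^sub>F k in sequentially. e (k - 1) powr (1 - q) \<le> C * lam ^ k"
      using rate_lin[OF epos elim Mq(2) q2 Mq(3) c0 rec] by blast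
    have "\<forall>\<^sub>F k in sequentially. norm (x (j (k - 1)) - xbar) \<le> (Kc * C) * lam ^ k"
      using evd C(4)
    proof eventually_elim
      case (elim k)
      then show ?case using Kc_pos by (smt (verit) mult.assoc mult_left_mono)
    qed
    then show ?thesis using C Kc_pos by (intro exI[of _ "Kc * C"]) auto
  qed
  have P2: "\<exists>vr>0. \<forall>\<^sub>F k in sequentially.
          norm (x (j (k - 1)) - xbar) \<le> vr * real k powr (- (1 - q) / (2 * q - 1))" if q2: "1/2 < q"
  proof -
    obtain v where v: "v > 0"
      "\<forall>\<^sub>F k in sequentially. e (k - 1) powr (1 - q) \<le> v * real k powr (- (1 - q) / (2 * q - 1))"
      using rate_sub[of e q c "max k0 k1", OF epos q2 Mq(3) c0 rec] by blast
    have "\<forall>\<^sub>F k in sequentially. norm (x (j (k - 1)) - xbar) \<le> (Kc * v) * real k powr (- (1 - q) / (2 * q - 1))"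
      using evd v(2)
    proof eventually_elim
      case (elim k)
      then show ?case using Kc_pos by (smt (verit) mult.assoc mult_left_mono)
    qed
    then show ?thesis using v Kc_pos by (intro exI[of _ "Kc * v"]) auto
  qed
  show ?thesis using P1 P2 unfolding j_def by blast
qed

end

theorem mainTheorem16:
  fixes f :: "'a::euclidean_space \<Rightarrow> real" and grad :: "'a \<Rightarrow> 'a"
    and x1 :: 'a and eps1 r1 mu theta beta gamma tau :: real and rho :: "nat \<Rightarrow> real"
    and x g d :: "nat \<Rightarrow> 'a" and eps r t :: "nat \<Rightarrow> real"
    and xbar :: 'a and M q :: real
  assumes C1: "C1_grad f grad"
    and eps1: "eps1 > 0" and r1: "r1 > 0"
    and mu: "0 < mu" "mu < 1" and theta: "0 < theta" "theta < 1"
    and theta_mu: "theta < mu"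
    and rho_pos: "\<forall>k\<ge>1. rho k > 0"
    and rho_lim: "rho \<longlonglongrightarrow> 0"
    and beta: "0 < beta" "beta < 1" and gamma: "0 < gamma" "gamma < 1"
    and tau: "0 < tau" "tau < 1"
    and alg: "IRG_backtracking f grad x1 eps1 r1 mu theta rho beta gamma tau x g eps r d t"
    and acc: "\<exists>s::nat \<Rightarrow> nat. strict_mono s \<and> (x \<circ> s) \<longlonglongrightarrow> xbar"
    and Mq: "M > 0" "0 < q" "q < 1"
    and KL: "KL_power f grad xbar M q"
    and Lip: "\<exists>\<delta>>0. \<exists>L. L-lipschitz_on (ball xbar \<delta>) grad"
    and inf: "infinite {k::nat. k \<ge> 1 \<and> x (k+1) \<noteq> x k}"
  shows
    "(q \<le> 1/2 \<longrightarrow>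
       (\<exists>C>0. \<exists>lam. 0 < lam \<and> lam < 1 \<and>
          (\<forall>\<^sub>F k in sequentially.
             norm (x (enumerate {k::nat. k \<ge> 1 \<and> x (k+1) \<noteq> x k} (k - 1)) - xbar) \<le> C * lam ^ k))) \<and>
     (1/2 < q \<longrightarrow>
       (\<exists>vr>0. \<forall>\<^sub>F k in sequentially.
          norm (x (enumerate {k::nat. k \<ge> 1 \<and> x (k+1) \<noteq> x k} (k - 1)) - xbar)
            \<le> vr * real k powr (- (1 - q) / (2 * q - 1))))"
  proof -
  interpret irg2 f grad x1 eps1 r1 mu theta beta gamma tau rho x g d eps r t xbar M q
    using C1 eps1 r1 mu theta theta_mu beta gamma tau alg acc Mq KL inf
    by unfold_locales auto
  show ?thesis using final[OF Lip] .
qed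

end
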